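(* (1) Let $a_n=\sum_{k=0}^n\binom{n}{k}^2\binom{n+k}{k}$. Then for every prime $p$ and every integer $n$ with $0\le n\le p-1$, $$a_n\equiv(-1)^na_{p-1-n}\pmod{p}.$$ (2) Let $b_n=\sum_{k=0}^n\binom{n}{k}^2\binom{2k}{k}$. Then for every prime $p>3$ and every integer $n$ with $0\le n\le p-1$, $$b_n\equiv\left(\frac{-3}{p}\right)9^nb_{p-1-n}\pmod{p},$$ where $\left(\frac{-3}{p}\right)$ is the Legendre symbol. *)

theory Defs
  imports "HOL-Number_Theory.Number_Theory"
begin

definition apery_a :: "nat \<Rightarrow> int" where
  "apery_a n = (\<Sum>k=0..n. int (n choose k) ^ 2 * int ((n + k) choose k))"

definition seq_b :: "nat \<Rightarrow> int" where
  "seq_b n = (\<Sum>k=0..n. int (n choose k) ^ 2 * int ((2 * k) choose k))"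

end

theory Submission
  imports Defs
begin



lemma absorbR: "(real N + 1 - real k) * real (Suc N choose k) = (real N + 1) * real (N choose k)"
proof (cases "k \<le> Suc N")
  case True
  have "(Suc N - k) * (Suc N choose k) = Suc N * (N choose k)"
    using binomial_absorb_comp[of "Suc N" k] by simp
  then have "real (Suc N - k) * real (Suc N choose k) = real (Suc N) * real (N choose k)"
    by (metis of_nat_mult)
  moreover have "real (Suc N - k) = real N + 1 - real k" using True by (simp add: of_nat_diff)
  ultimately show ?thesis by simp
next
  case False then show ?thesis by (simp add: binomial_eq_0)
qed

lemma sucR: "(real k + 1) * real (Suc N choose Suc k) = (real N + 1) * real (N choose k)"
proof -
  have "real (Suc k * (Suc N choose Suc k)) = real (Suc N * (N choose k))"
    using Suc_times_binomial by presburger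
  then show ?thesis by (simp add: algebra_simps)
qed

lemma alg_a:
  fixes n k x0 x1 u w v v1 v2 v3 :: real
  assumes n: "n \<ge> 0" and k: "k \<ge> 0"
  and e1: "(n + 2 - k) * u = (n + 2) * x1"
  and e2: "(n + 1 - k) * x1 = (n + 1) * x0"
  and e3: "(k + 1) * w = (n + 2) * x1"
  and e4: "(k + 1) * v3 = (n + k + 1) * v"
  and e5: "(n + 1) * v1 = (n + k + 1) * v"
  and e6: "(n + 2) * v2 = (n + k + 2) * v1"
  shows "((n+1)*(n+2))^2 * ((n+2)^2 * (u^2 * v2) - (11*n^2+33*n+25) * (x1^2*v1) - (n+1)^2 * (x0^2 * v))
   = (k+1)^3*(-30 + 7*(k+1) + (k+1)^2 - 67*n + 13*n*(k+1) + n*(k+1)^2 - 48*n^2 + 6*n^2*(k+1) - 11*n^3) * (w^2 * v3)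
   - k^3*(-30 + 7*k + k^2 - 67*n + 13*n*k + n*k^2 - 48*n^2 + 6*n^2*k - 11*n^3) * (u^2 * v)"
proof -
  have x1: "x1 = (n + 2 - k) * u / (n+2)" using e1 n by (simp add: field_simps)
  have x0: "x0 = (n + 1 - k) * x1 / (n+1)" using e2 n by (simp add: field_simps)
  have w: "w = (n + 2) * x1 / (k+1)" using e3 k by (simp add: field_simps)
  have v3: "v3 = (n + k + 1) * v / (k+1)" using e4 k by (simp add: field_simps)
  have v1: "v1 = (n + k + 1) * v / (n+1)" using e5 n by (simp add: field_simps)
  have v2: "v2 = (n + k + 2) * v1 / (n+2)" using e6 n by (simp add: field_simps)
  have nz: "n + 1 \<noteq> 0" "n + 2 \<noteq> 0" "k + 1 \<noteq> 0" using n k by auto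
  have t1: "((n+1)*(n+2))^2 * ((n+2)^2 * (u^2 * v2)) = (n+1)*(n+2)^3*(n+k+1)*(n+k+2)*(u^2*v)"
  proof -
    have "((n+1)*(n+2))^2 * ((n+2)^2 * (u^2 * v2)) = (n+1)^2*(n+2)^3*u^2*((n+2)*v2)" by (simp add: algebra_simps power2_eq_square power3_eq_cube)
    also have "\<dots> = (n+1)*(n+2)^3*u^2*(n+k+2)*((n+1)*v1)" unfolding e6 by (simp add: algebra_simps power2_eq_square power3_eq_cube)
    also have "\<dots> = (n+1)*(n+2)^3*(n+k+1)*(n+k+2)*(u^2*v)" unfolding e5 by (simp add: algebra_simps power2_eq_square power3_eq_cube)
    finally show ?thesis .
  qed
  have t2: "((n+1)*(n+2))^2 * (x1^2*v1) = (n+1)*(n+2-k)^2*(n+k+1)*(u^2*v)"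
  proof -
    have "((n+1)*(n+2))^2 * (x1^2*v1) = ((n+2)*x1)^2 * (n+1) * ((n+1)*v1)" by (simp add: algebra_simps power2_eq_square power3_eq_cube)
    also have "\<dots> = (n+1)*(n+2-k)^2*(n+k+1)*(u^2*v)" unfolding e5 e1[symmetric] by (simp add: algebra_simps power2_eq_square power3_eq_cube)
    finally show ?thesis .
  qed
  have t3: "((n+1)*(n+2))^2 * (x0^2*v) = (n+1-k)^2*(n+2-k)^2*(u^2*v)"
  proof -
    have "((n+1)*(n+2))^2 * (x0^2*v) = ((n+1)*x0)^2 * (n+2)^2 * v" by (simp add: algebra_simps power2_eq_square power3_eq_cube)
    also have "\<dots> = (n+1-k)^2 * ((n+2)*x1)^2 * v" unfolding e2[symmetric] by (simp add: algebra_simps power2_eq_square power3_eq_cube)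
    also have "\<dots> = (n+1-k)^2*(n+2-k)^2*(u^2*v)" unfolding e1[symmetric] by (simp add: algebra_simps power2_eq_square power3_eq_cube)
    finally show ?thesis .
  qed
  have t4: "(k+1)^3 * (w^2 * v3) = (n+2-k)^2*(n+k+1)*(u^2*v)"
  proof -
    have "(k+1)^3 * (w^2 * v3) = ((k+1)*w)^2 * ((k+1)*v3)" by (simp add: algebra_simps power2_eq_square power3_eq_cube)
    also have "\<dots> = ((n+2)*x1)^2 * ((n + k + 1) * v)" unfolding e3 e4 by (simp add: algebra_simps power2_eq_square power3_eq_cube)
    also have "\<dots> = (n+2-k)^2*(n+k+1)*(u^2*v)" unfolding e1[symmetric] by (simp add: algebra_simps power2_eq_square power3_eq_cube)
    finally show ?thesis .
  qed
  have L: "((n+1)*(n+2))^2 * ((n+2)^2 * (u^2 * v2) - (11*n^2+33*n+25) * (x1^2*v1) - (n+1)^2 * (x0^2 * v))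
     = (((n+1)*(n+2))^2 * ((n+2)^2 * (u^2 * v2))) - (11*n^2+33*n+25) * (((n+1)*(n+2))^2 * (x1^2*v1)) - (n+1)^2 * (((n+1)*(n+2))^2 * (x0^2*v))"
    by (simp add: algebra_simps)
  have R: "(k+1)^3*(-30 + 7*(k+1) + (k+1)^2 - 67*n + 13*n*(k+1) + n*(k+1)^2 - 48*n^2 + 6*n^2*(k+1) - 11*n^3) * (w^2 * v3)
   = (-30 + 7*(k+1) + (k+1)^2 - 67*n + 13*n*(k+1) + n*(k+1)^2 - 48*n^2 + 6*n^2*(k+1) - 11*n^3) * ((k+1)^3 * (w^2 * v3))"
    by (simp add: algebra_simps)
  show ?thesis unfolding L R t1 t2 t3 t4 by (simp add: algebra_simps power2_eq_square power3_eq_cube)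
qed




definition Fa :: "nat \<Rightarrow> nat \<Rightarrow> real" where
  "Fa n k = real (n choose k)^2 * real ((n+k) choose k)"

definition Qa :: "nat \<Rightarrow> nat \<Rightarrow> real" where
  "Qa n k = real k^3*(-30 + 7*real k + real k^2 - 67*real n + 13*real n*real k + real n*real k^2
      - 48*real n^2 + 6*real n^2*real k - 11*real n^3)"

definition Ga :: "nat \<Rightarrow> nat \<Rightarrow> real" where
  "Ga n k = Qa n k * (real (Suc (Suc n) choose k)^2 * real ((n+k) choose k))"

lemma tele_a: "((real n+1)*(real n+2))^2 * ((real n+2)^2 * Fa (Suc (Suc n)) k
   - (11*real n^2+33*real n+25) * Fa (Suc n) k - (real n+1)^2 * Fa n k) = Ga n (Suc k) - Ga n k"
proof -
  have e1: "(real n + 2 - real k) * real (Suc (Suc n) choose k) = (real n + 2) * real (Suc n choose k)"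
    using absorbR[of "Suc n" k] by (simp add: algebra_simps)
  have e2: "(real n + 1 - real k) * real (Suc n choose k) = (real n + 1) * real (n choose k)"
    using absorbR[of n k] by (simp add: algebra_simps)
  have e3: "(real k + 1) * real (Suc (Suc n) choose Suc k) = (real n + 2) * real (Suc n choose k)"
    using sucR[of k "Suc n"] by (simp add: algebra_simps)
  have e4: "(real k + 1) * real ((n + Suc k) choose Suc k) = (real n + real k + 1) * real ((n+k) choose k)"
    using sucR[of k "n+k"] by (simp add: algebra_simps)
  have e5: "(real n + 1) * real ((Suc n + k) choose k) = (real n + real k + 1) * real ((n+k) choose k)"
    using absorbR[of "n+k" k] by (simp add: algebra_simps)
  have e6: "(real n + 2) * real ((Suc (Suc n) + k) choose k) = (real n + real k + 2) * real ((Suc n+k) choose k)"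
    using absorbR[of "Suc n+k" k] by (simp add: algebra_simps)
  show ?thesis
    using alg_a[OF _ _ e1 e2 e3 e4 e5 e6]
    unfolding Fa_def Ga_def Qa_def by (simp add: algebra_simps)
qed

lemma seq_a_real: "real_of_int (apery_a n) = (\<Sum>k=0..n. Fa n k)"
  unfolding apery_a_def Fa_def by simp

lemma sum_ext: "n \<le> N \<Longrightarrow> (\<Sum>k=0..N. Fa n k) = (\<Sum>k=0..n. Fa n k)"
  by (rule sum.mono_neutral_right) (auto simp: Fa_def binomial_eq_0)

lemma sum_lin: "(\<Sum>k\<in>A. (c::real)*(a*f k - b*g k - d*h k)) = c*(a*sum f A - b*sum g A - d*sum h A)"
  by (simp add: sum_distrib_left sum_subtractf sum.distrib right_diff_distrib mult.assoc)

lemma rec_a_real: "(real n+2)^2 * apery_a (Suc (Suc n)) - (11*real n^2+33*real n+25) * apery_a (Suc n)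
    - (real n+1)^2 * apery_a n = 0"
proof -
  have "(\<Sum>k=0..n+2. ((real n+1)*(real n+2))^2 * ((real n+2)^2 * Fa (Suc (Suc n)) k
   - (11*real n^2+33*real n+25) * Fa (Suc n) k - (real n+1)^2 * Fa n k)) = (\<Sum>k=0..n+2. Ga n (Suc k) - Ga n k)"
    using tele_a by simp
  also have "\<dots> = Ga n (Suc (n+2)) - Ga n 0" by (rule sum_Suc_diff) simp
  also have "\<dots> = 0" by (simp add: Ga_def Qa_def binomial_eq_0)
  finally have "((real n+1)*(real n+2))^2 * ((real n+2)^2 * (\<Sum>k=0..n+2. Fa (Suc (Suc n)) k)
   - (11*real n^2+33*real n+25) * (\<Sum>k=0..n+2. Fa (Suc n) k) - (real n+1)^2 * (\<Sum>k=0..n+2. Fa n k)) = 0"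
    by (simp only: sum_lin)
  moreover have "(\<Sum>k=0..n+2. Fa (Suc (Suc n)) k) = apery_a (Suc (Suc n))"
    using sum_ext[of "Suc (Suc n)" "n+2"] seq_a_real by simp
  moreover have "(\<Sum>k=0..n+2. Fa (Suc n) k) = apery_a (Suc n)"
    using sum_ext[of "Suc n" "n+2"] seq_a_real by simp
  moreover have "(\<Sum>k=0..n+2. Fa n k) = apery_a n"
    using sum_ext[of n "n+2"] seq_a_real by simp
  ultimately show ?thesis by simp
qed

lemma rec_a: "(int n+2)^2 * apery_a (Suc (Suc n)) = (11*int n^2+33*int n+25) * apery_a (Suc n)
    + (int n+1)^2 * apery_a n"
proof -
  have "real_of_int ((int n+2)^2 * apery_a (Suc (Suc n))) = real_of_int ((11*int n^2+33*int n+25) * apery_a (Suc n)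
    + (int n+1)^2 * apery_a n)" using rec_a_real[of n] by simp
  then show ?thesis by (simp only: of_int_eq_iff)
qed




lemma alg_b:
  fixes n k x0 x1 u w c c1 :: real
  assumes e1: "(n + 2 - k) * u = (n + 2) * x1"
  and e2: "(n + 1 - k) * x1 = (n + 1) * x0"
  and e3: "(k + 1) * w = (n + 2) * x1"
  and e4: "(k + 1) * c1 = 2*(2*k+1) * c"
  shows "((n+1)*(n+2))^2 * ((n+2)^2 * (u^2 * c) - (10*n^2+30*n+23) * (x1^2*c) + 9*(n+1)^2 * (x0^2 * c))
   = (k+1)^3*(-8 + 3*(k+1) - 20*n + 6*n*(k+1) - 16*n^2 + 3*n^2*(k+1) - 4*n^3) * (w^2 * c1)
   - k^3*(-8 + 3*k - 20*n + 6*n*k - 16*n^2 + 3*n^2*k - 4*n^3) * (u^2 * c)"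
proof -
  have t2: "((n+1)*(n+2))^2 * (x1^2*c) = (n+1)^2*(n+2-k)^2*(u^2*c)"
  proof -
    have "((n+1)*(n+2))^2 * (x1^2*c) = ((n+2)*x1)^2 * (n+1)^2 * c" by (simp add: algebra_simps power2_eq_square power3_eq_cube)
    also have "\<dots> = (n+1)^2*(n+2-k)^2*(u^2*c)" unfolding e1[symmetric] by (simp add: algebra_simps power2_eq_square power3_eq_cube)
    finally show ?thesis .
  qed
  have t3: "((n+1)*(n+2))^2 * (x0^2*c) = (n+1-k)^2*(n+2-k)^2*(u^2*c)"
  proof -
    have "((n+1)*(n+2))^2 * (x0^2*c) = ((n+1)*x0)^2 * (n+2)^2 * c" by (simp add: algebra_simps power2_eq_square power3_eq_cube)
    also have "\<dots> = (n+1-k)^2 * ((n+2)*x1)^2 * c" unfolding e2[symmetric] by (simp add: algebra_simps power2_eq_square power3_eq_cube)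
    also have "\<dots> = (n+1-k)^2*(n+2-k)^2*(u^2*c)" unfolding e1[symmetric] by (simp add: algebra_simps power2_eq_square power3_eq_cube)
    finally show ?thesis .
  qed
  have t4: "(k+1)^3 * (w^2 * c1) = (n+2-k)^2*(2*(2*k+1))*(u^2*c)"
  proof -
    have "(k+1)^3 * (w^2 * c1) = ((k+1)*w)^2 * ((k+1)*c1)" by (simp add: algebra_simps power2_eq_square power3_eq_cube)
    also have "\<dots> = ((n+2)*x1)^2 * (2*(2*k+1) * c)" unfolding e3 e4 by (simp add: algebra_simps power2_eq_square power3_eq_cube)
    also have "\<dots> = (n+2-k)^2*(2*(2*k+1))*(u^2*c)" unfolding e1[symmetric] by (simp add: algebra_simps power2_eq_square power3_eq_cube)
    finally show ?thesis .
  qed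
  have L: "((n+1)*(n+2))^2 * ((n+2)^2 * (u^2 * c) - (10*n^2+30*n+23) * (x1^2*c) + 9*(n+1)^2 * (x0^2 * c))
     = ((n+1)*(n+2))^2 * (n+2)^2 * (u^2 * c) - (10*n^2+30*n+23) * (((n+1)*(n+2))^2 * (x1^2*c)) + 9*(n+1)^2 * (((n+1)*(n+2))^2 * (x0^2*c))"
    by (simp add: algebra_simps)
  have R: "(k+1)^3*(-8 + 3*(k+1) - 20*n + 6*n*(k+1) - 16*n^2 + 3*n^2*(k+1) - 4*n^3) * (w^2 * c1)
   = (-8 + 3*(k+1) - 20*n + 6*n*(k+1) - 16*n^2 + 3*n^2*(k+1) - 4*n^3) * ((k+1)^3 * (w^2 * c1))"
    by (simp add: algebra_simps)
  show ?thesis unfolding L R t2 t3 t4 by (simp add: algebra_simps power2_eq_square power3_eq_cube)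
qed

lemma central_rec: "(real k + 1) * real (Suc (Suc (2*k)) choose Suc k) = 2*(2*real k+1) * real ((2*k) choose k)"
proof -
  have a: "(real k + 1) * real (Suc (Suc (2*k)) choose Suc k) = (real (2*k) + 2) * real (Suc (2*k) choose k)"
    using sucR[of k "Suc (2*k)"] by (simp add: algebra_simps)
  have b: "(real (2*k) + 1 - real k) * real (Suc (2*k) choose k) = (real (2*k) + 1) * real ((2*k) choose k)"
    using absorbR[of "2*k" k] .
  have "real (2*k) + 1 - real k = real k + 1" by simp
  with b have b': "(real k + 1) * real (Suc (2*k) choose k) = (2*real k + 1) * real ((2*k) choose k)" by simp
  have "(real k + 1) * real (Suc (Suc (2*k)) choose Suc k) = 2 * ((real k + 1) * real (Suc (2*k) choose k))"
    using a by (simp add: algebra_simps)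
  then show ?thesis using b' by simp
qed

definition Fb :: "nat \<Rightarrow> nat \<Rightarrow> real" where
  "Fb n k = real (n choose k)^2 * real ((2*k) choose k)"

definition Gb :: "nat \<Rightarrow> nat \<Rightarrow> real" where
  "Gb n k = real k^3*(-8 + 3*real k - 20*real n + 6*real n*real k - 16*real n^2 + 3*real n^2*real k - 4*real n^3)
     * (real (Suc (Suc n) choose k)^2 * real ((2*k) choose k))"

lemma tele_b: "((real n+1)*(real n+2))^2 * ((real n+2)^2 * Fb (Suc (Suc n)) k
   - (10*real n^2+30*real n+23) * Fb (Suc n) k + 9*(real n+1)^2 * Fb n k) = Gb n (Suc k) - Gb n k"
proof -
  have e1: "(real n + 2 - real k) * real (Suc (Suc n) choose k) = (real n + 2) * real (Suc n choose k)"
    using absorbR[of "Suc n" k] by (simp add: algebra_simps)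
  have e2: "(real n + 1 - real k) * real (Suc n choose k) = (real n + 1) * real (n choose k)"
    using absorbR[of n k] by (simp add: algebra_simps)
  have e3: "(real k + 1) * real (Suc (Suc n) choose Suc k) = (real n + 2) * real (Suc n choose k)"
    using sucR[of k "Suc n"] by (simp add: algebra_simps)
  have e4: "(real k + 1) * real ((2 * Suc k) choose Suc k) = 2*(2*real k+1) * real ((2*k) choose k)"
    using central_rec[of k] by simp
  show ?thesis
    using alg_b[OF e1 e2 e3 e4]
    unfolding Fb_def Gb_def by (simp add: algebra_simps)
qed

lemma seq_b_real: "real_of_int (seq_b n) = (\<Sum>k=0..n. Fb n k)"
  unfolding seq_b_def Fb_def by simp

lemma sum_ext_b: "n \<le> N \<Longrightarrow> (\<Sum>k=0..N. Fb n k) = (\<Sum>k=0..n. Fb n k)"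
  by (rule sum.mono_neutral_right) (auto simp: Fb_def binomial_eq_0)

lemma sum_lin2: "(\<Sum>k\<in>A. (c::real)*(a*f k - b*g k + d*h k)) = c*(a*sum f A - b*sum g A + d*sum h A)"
  by (simp add: sum_distrib_left sum_subtractf sum.distrib right_diff_distrib distrib_left mult.assoc)

lemma rec_b_real: "(real n+2)^2 * seq_b (Suc (Suc n)) - (10*real n^2+30*real n+23) * seq_b (Suc n)
    + 9*(real n+1)^2 * seq_b n = 0"
proof -
  have "(\<Sum>k=0..n+2. ((real n+1)*(real n+2))^2 * ((real n+2)^2 * Fb (Suc (Suc n)) k
   - (10*real n^2+30*real n+23) * Fb (Suc n) k + 9*(real n+1)^2 * Fb n k)) = (\<Sum>k=0..n+2. Gb n (Suc k) - Gb n k)"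
    using tele_b by simp
  also have "\<dots> = Gb n (Suc (n+2)) - Gb n 0" by (rule sum_Suc_diff) simp
  also have "\<dots> = 0" by (simp add: Gb_def binomial_eq_0)
  finally have "((real n+1)*(real n+2))^2 * ((real n+2)^2 * (\<Sum>k=0..n+2. Fb (Suc (Suc n)) k)
   - (10*real n^2+30*real n+23) * (\<Sum>k=0..n+2. Fb (Suc n) k) + (9*(real n+1)^2) * (\<Sum>k=0..n+2. Fb n k)) = 0"
    by (simp only: sum_lin2)
  moreover have "(\<Sum>k=0..n+2. Fb (Suc (Suc n)) k) = seq_b (Suc (Suc n))"
    using sum_ext_b[of "Suc (Suc n)" "n+2"] seq_b_real by simp
  moreover have "(\<Sum>k=0..n+2. Fb (Suc n) k) = seq_b (Suc n)"
    using sum_ext_b[of "Suc n" "n+2"] seq_b_real by simp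
  moreover have "(\<Sum>k=0..n+2. Fb n k) = seq_b n"
    using sum_ext_b[of n "n+2"] seq_b_real by simp
  ultimately show ?thesis by simp
qed

lemma rec_b: "(int n+2)^2 * seq_b (Suc (Suc n)) = (10*int n^2+30*int n+23) * seq_b (Suc n)
    - 9*(int n+1)^2 * seq_b n"
proof -
  have "real_of_int ((int n+2)^2 * seq_b (Suc (Suc n))) = real_of_int ((10*int n^2+30*int n+23) * seq_b (Suc n)
    - 9*(int n+1)^2 * seq_b n)" using rec_b_real[of n] by (simp add: algebra_simps)
  then show ?thesis by (simp only: of_int_eq_iff)
qed




lemma cop: assumes "prime p" "0 < m" "m < p" shows "coprime (int m) (int p)"
proof -
  have "prime (int p)" using assms(1) by simp
  moreover have "\<not> int p dvd int m" using assms(2,3) by (auto dest: dvd_imp_le)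
  ultimately have "coprime (int p) (int m)" by (rule prime_imp_coprime)
  then show ?thesis by (simp add: ac_simps)
qed

lemma uniq:
  fixes x y A B :: "nat \<Rightarrow> int" and p :: nat
  assumes p: "prime p"
  and rx: "\<And>n. Suc n \<le> p - 1 \<Longrightarrow> [(int n + 1)^2 * x (Suc n) = A n * x n + B n * x (n - 1)] (mod int p)"
  and ry: "\<And>n. Suc n \<le> p - 1 \<Longrightarrow> [(int n + 1)^2 * y (Suc n) = A n * y n + B n * y (n - 1)] (mod int p)"
  and b0: "[x 0 = y 0] (mod int p)"
  shows "n \<le> p - 1 \<Longrightarrow> [x n = y n] (mod int p)"
proof -
  have "\<forall>m\<le>n. m \<le> p - 1 \<longrightarrow> [x m = y m] (mod int p)"
  proof (induction n)
    case 0 then show ?case using b0 by simp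
  next
    case (Suc n)
    show ?case
    proof (intro allI impI)
      fix m assume m: "m \<le> Suc n" "m \<le> p - 1"
      show "[x m = y m] (mod int p)"
      proof (cases "m \<le> n")
        case True then show ?thesis using Suc.IH m by blast
      next
        case False
        then have mm: "m = Suc n" using m by simp
        have hn: "[x n = y n] (mod int p)" using Suc.IH m mm by simp
        have hn1: "[x (n-1) = y (n-1)] (mod int p)" using Suc.IH m mm by simp
        have "[(int n + 1)^2 * x (Suc n) = A n * x n + B n * x (n - 1)] (mod int p)" using rx m mm by simp
        also have "[A n * x n + B n * x (n - 1) = A n * y n + B n * y (n - 1)] (mod int p)"
          using hn hn1 by (intro cong_add cong_mult cong_refl)
        also have "[A n * y n + B n * y (n - 1) = (int n + 1)^2 * y (Suc n)] (mod int p)"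
          using ry m mm by (simp add: cong_sym)
        finally have c: "[(int n + 1)^2 * x (Suc n) = (int n + 1)^2 * y (Suc n)] (mod int p)" .
        have "coprime (int (Suc n)) (int p)" using cop[OF p, of "Suc n"] m mm p prime_gt_1_nat by simp
        then have "coprime ((int n + 1)^2) (int p)" by (simp add: add.commute)
        then show ?thesis using c mm by (simp add: cong_mult_lcancel)
      qed
    qed
  qed
  then show "n \<le> p - 1 \<Longrightarrow> [x n = y n] (mod int p)" by blast
qed




lemma rec_a_fwd: "(int n + 1)^2 * apery_a (Suc n) = (11*int n^2 + 11*int n + 3) * apery_a n + (int n)^2 * apery_a (n - 1)"
proof (cases n)
  case 0 then show ?thesis by (simp add: apery_a_def)
next
  case (Suc m)
  have "(int m+2)^2 * apery_a (Suc (Suc m)) = (11*int m^2+33*int m+25) * apery_a (Suc m) + (int m+1)^2 * apery_a m"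
    by (rule rec_a)
  then show ?thesis using Suc by (simp add: algebra_simps power2_eq_square)
qed

lemma crec_a:
  assumes p: "prime p" and n: "Suc n \<le> p - 1"
  defines "c \<equiv> \<lambda>m. (-1)^m * apery_a (p - 1 - m)"
  shows "[(int n + 1)^2 * c (Suc n) = (11*int n^2 + 11*int n + 3) * c n + (int n)^2 * c (n - 1)] (mod int p)"
proof -
  define j where "j = p - 2 - n"
  define X where "X = apery_a (p - n)"
  define Y where "Y = apery_a (p - 1 - n)"
  define Z where "Z = apery_a (p - 2 - n)"
  have jn: "Suc (Suc j) = p - n" "Suc j = p - 1 - n" using n unfolding j_def by auto
  have ij: "int j = int p - 2 - int n" using n unfolding j_def by auto
  have r: "(int j+2)^2 * X = (11*int j^2+33*int j+25) * Y + (int j+1)^2 * Z"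
  proof -
    have e: "p - n = Suc (Suc j)" "p - 1 - n = Suc j" "p - 2 - n = j" using jn j_def by auto
    show ?thesis using rec_a[of j] unfolding X_def Y_def Z_def e .
  qed
  define P where "P = int p"
  define N where "N = int n"
  have r2: "(P - N)^2 * X = (11*(P-2-N)^2+33*(P-2-N)+25) * Y + (P-2-N+1)^2 * Z"
    using r unfolding ij P_def N_def by (simp add: algebra_simps)
  have key: "N^2 * X - (11*N^2+11*N+3) * Y - (N+1)^2 * Z
       = P * ((2*N - P) * X + (11*P - 22*N - 11) * Y - (2*N + 2 - P) * Z)"
  proof -
    have "N^2 * X - (11*N^2+11*N+3) * Y - (N+1)^2 * Z - P * ((2*N - P) * X + (11*P - 22*N - 11) * Y - (2*N + 2 - P) * Z)
      = ((P - N)^2 * X - ((11*(P-2-N)^2+33*(P-2-N)+25) * Y + (P-2-N+1)^2 * Z))"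
      by (simp add: algebra_simps power2_eq_square)
    also have "\<dots> = 0" using r2 by simp
    finally show ?thesis by simp
  qed
  define s where "s = ((-1)::int)^(Suc n)"
  have c1: "c (Suc n) = s * Z" unfolding c_def s_def Z_def by (simp add: numeral_2_eq_2)
  have c0: "c n = - s * Y" unfolding c_def s_def Y_def by simp
  have cm: "N^2 * c (n - 1) = N^2 * (s * X)"
  proof (cases n)
    case 0 then show ?thesis by (simp add: N_def)
  next
    case (Suc m)
    then have "p - 1 - (n - 1) = p - n" using n by auto
    then show ?thesis unfolding c_def s_def X_def using Suc by simp
  qed
  have "(int n + 1)^2 * c (Suc n) - ((11*int n^2 + 11*int n + 3) * c n + (int n)^2 * c (n - 1))
      = - s * (N^2 * X - (11*N^2+11*N+3) * Y - (N+1)^2 * Z)"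
    using cm unfolding c1 c0 N_def by (simp add: algebra_simps) (metis mult.commute)
  also have "\<dots> = P * (- s * ((2*N - P) * X + (11*P - 22*N - 11) * Y - (2*N + 2 - P) * Z))"
    unfolding key by (simp add: algebra_simps)
  finally show ?thesis unfolding cong_iff_dvd_diff P_def by (metis dvd_triv_left)
qed

lemma prime_dvd_binom:
  assumes p: "prime p" and "k < p" "N - k < p" "p \<le> N"
  shows "p dvd (N choose k)"
proof -
  have kN: "k \<le> N" using assms by auto
  have "fact k * fact (N - k) * (N choose k) = (fact N :: nat)" by (rule binomial_fact_lemma[OF kN])
  moreover have "p dvd (fact N :: nat)" using p assms by (simp add: prime_dvd_fact_iff)
  ultimately have "p dvd fact k * fact (N - k) * (N choose k)" by simp
  moreover have "\<not> p dvd (fact k :: nat)" using p assms by (simp add: prime_dvd_fact_iff)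
  moreover have "\<not> p dvd (fact (N - k) :: nat)" using p assms by (simp add: prime_dvd_fact_iff)
  ultimately show ?thesis using p by (simp add: prime_dvd_mult_iff)
qed

lemma a_last: assumes p: "prime p" shows "[apery_a (p - 1) = 1] (mod int p)"
proof -
  have p1: "p \<ge> 2" using p prime_ge_2_nat by blast
  have "apery_a (p - 1) = (\<Sum>k=0..p-1. int (p-1 choose k)^2 * int ((p - 1 + k) choose k))"
    unfolding apery_a_def ..
  also have "\<dots> = 1 + (\<Sum>k=Suc 0..p-1. int (p-1 choose k)^2 * int ((p - 1 + k) choose k))"
    by (subst sum.atLeast_Suc_atMost) auto
  finally have e: "apery_a (p - 1) = 1 + (\<Sum>k=Suc 0..p-1. int (p-1 choose k)^2 * int ((p - 1 + k) choose k))" .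
  have "int p dvd (\<Sum>k=Suc 0..p-1. int (p-1 choose k)^2 * int ((p - 1 + k) choose k))"
  proof (rule dvd_sum)
    fix k assume k: "k \<in> {Suc 0..p-1}"
    have "p dvd ((p - 1 + k) choose k)" using k p1 by (intro prime_dvd_binom[OF p]) auto
    then have "int p dvd int ((p - 1 + k) choose k)" by simp
    then show "int p dvd int (p-1 choose k)^2 * int ((p - 1 + k) choose k)" by simp
  qed
  then show ?thesis unfolding e cong_iff_dvd_diff by simp
qed

theorem part1: assumes p: "prime p" and n: "n \<le> p - 1"
  shows "[apery_a n = (-1) ^ n * apery_a (p - 1 - n)] (mod int p)"
proof -
  define c where "c \<equiv> \<lambda>m. (-1)^m * apery_a (p - 1 - m)"
  have "[apery_a n = c n] (mod int p)"
  proof (rule uniq[OF p, where A = "\<lambda>n. 11*int n^2 + 11*int n + 3" and B = "\<lambda>n. (int n)^2"])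
    show "\<And>n. Suc n \<le> p - 1 \<Longrightarrow> [(int n + 1)^2 * apery_a (Suc n) = (11*int n^2 + 11*int n + 3) * apery_a n + (int n)^2 * apery_a (n - 1)] (mod int p)"
      using rec_a_fwd by simp
    show "\<And>n. Suc n \<le> p - 1 \<Longrightarrow> [(int n + 1)^2 * c (Suc n) = (11*int n^2 + 11*int n + 3) * c n + (int n)^2 * c (n - 1)] (mod int p)"
      unfolding c_def by (rule crec_a[OF p])
    show "[apery_a 0 = c 0] (mod int p)"
      using a_last[OF p] unfolding c_def by (simp add: apery_a_def cong_sym)
    show "n \<le> p - 1" by (rule n)
  qed
  then show ?thesis unfolding c_def .
qed




lemma rec_b_fwd: "(int n + 1)^2 * seq_b (Suc n) = (10*int n^2 + 10*int n + 3) * seq_b n + (-9*(int n)^2) * seq_b (n - 1)"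
proof (cases n)
  case 0 then show ?thesis by (simp add: seq_b_def)
next
  case (Suc m)
  have "(int m+2)^2 * seq_b (Suc (Suc m)) = (10*int m^2+30*int m+23) * seq_b (Suc m) - 9*(int m+1)^2 * seq_b m"
    by (rule rec_b)
  then show ?thesis using Suc by (simp add: algebra_simps power2_eq_square)
qed

lemma crec_b:
  fixes e :: int
  assumes p: "prime p" and n: "Suc n \<le> p - 1"
  defines "c \<equiv> \<lambda>m. e * 9^m * seq_b (p - 1 - m)"
  shows "[(int n + 1)^2 * c (Suc n) = (10*int n^2 + 10*int n + 3) * c n + (-9*(int n)^2) * c (n - 1)] (mod int p)"
proof -
  define j where "j = p - 2 - n"
  define X where "X = seq_b (p - n)"
  define Y where "Y = seq_b (p - 1 - n)"
  define Z where "Z = seq_b (p - 2 - n)"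
  have jn: "Suc (Suc j) = p - n" "Suc j = p - 1 - n" using n unfolding j_def by auto
  have ij: "int j = int p - 2 - int n" using n unfolding j_def by auto
  have r: "(int j+2)^2 * X = (10*int j^2+30*int j+23) * Y - 9*(int j+1)^2 * Z"
  proof -
    have e: "p - n = Suc (Suc j)" "p - 1 - n = Suc j" "p - 2 - n = j" using jn j_def by auto
    show ?thesis using rec_b[of j] unfolding X_def Y_def Z_def e .
  qed
  define P where "P = int p"
  define N where "N = int n"
  have r2: "(P - N)^2 * X = (10*(P-2-N)^2+30*(P-2-N)+23) * Y - 9*(P-2-N+1)^2 * Z"
    using r unfolding ij P_def N_def by (simp add: algebra_simps)
  have key: "N^2 * X - (10*N^2+10*N+3) * Y + 9*(N+1)^2 * Z
       = P * ((2*N - P) * X + (10*P - 20*N - 10) * Y + 9*(2*N + 2 - P) * Z)"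
  proof -
    have "N^2 * X - (10*N^2+10*N+3) * Y + 9*(N+1)^2 * Z - P * ((2*N - P) * X + (10*P - 20*N - 10) * Y + 9*(2*N + 2 - P) * Z)
      = ((P - N)^2 * X - ((10*(P-2-N)^2+30*(P-2-N)+23) * Y - 9*(P-2-N+1)^2 * Z))"
      by (simp add: algebra_simps power2_eq_square)
    also have "\<dots> = 0" using r2 by simp
    finally show ?thesis by simp
  qed
  define t where "t = e * 9^n"
  have c1: "c (Suc n) = 9 * t * Z" unfolding c_def t_def Z_def by (simp add: numeral_2_eq_2)
  have c0: "c n = t * Y" unfolding c_def t_def Y_def by simp
  have cm: "9 * (N^2 * c (n - 1)) = N^2 * (t * X)"
  proof (cases n)
    case 0 then show ?thesis by (simp add: N_def)
  next
    case (Suc m)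
    then have "p - 1 - (n - 1) = p - n" using n by auto
    then show ?thesis unfolding c_def t_def X_def using Suc by simp
  qed
  have "(int n + 1)^2 * c (Suc n) - ((10*int n^2 + 10*int n + 3) * c n + (-9*(int n)^2) * c (n - 1))
      = (int n + 1)^2 * c (Suc n) - (10*int n^2 + 10*int n + 3) * c n + 9 * ((int n)^2 * c (n - 1))"
    by (simp add: algebra_simps)
  also have "\<dots> = t * (N^2 * X - (10*N^2+10*N+3) * Y + 9*(N+1)^2 * Z)"
    using cm unfolding c1 c0 N_def by (simp add: algebra_simps)
  also have "\<dots> = P * (t * ((2*N - P) * X + (10*P - 20*N - 10) * Y + 9*(2*N + 2 - P) * Z))"
    unfolding key by (simp add: algebra_simps)
  finally show ?thesis unfolding cong_iff_dvd_diff P_def by (metis dvd_triv_left)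
qed

lemma binom_pm1: assumes p: "prime p" shows "k \<le> p - 1 \<Longrightarrow> [int (p - 1 choose k) = (-1)^k] (mod int p)"
proof (induction k)
  case 0 then show ?case by simp
next
  case (Suc k)
  have p1: "p \<ge> 2" using p prime_ge_2_nat by blast
  have pas: "p choose Suc k = (p - 1 choose k) + (p - 1 choose Suc k)"
    using binomial_Suc_Suc[of "p - 1" k] p1 by simp
  have "p dvd (p choose Suc k)" using Suc.prems p1 by (intro dvd_choose_prime p) auto
  then have "int p dvd int (p - 1 choose k) + int (p - 1 choose Suc k)" using pas
    by (metis of_nat_add of_nat_dvd_iff)
  then have "[int (p - 1 choose Suc k) = - int (p - 1 choose k)] (mod int p)"
    unfolding cong_iff_dvd_diff by (simp add: add.commute)
  moreover have "[- int (p - 1 choose k) = - ((-1)^k)] (mod int p)"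
    using Suc.IH Suc.prems by (intro cong_minus_minus_iff[THEN iffD2]) simp
  ultimately show ?case by (simp add: cong_trans)
qed

lemma absorb_h: "int (Suc k) * int (h choose Suc k) = (int h - int k) * int (h choose k)"
proof (cases "k \<le> h")
  case True
  have "Suc k * (h choose Suc k) = (h - k) * (h choose k)"
    using binomial_absorption[of k h] binomial_absorb_comp[of h k] by simp
  then have "int (Suc k * (h choose Suc k)) = int ((h - k) * (h choose k))" by simp
  then show ?thesis using True by (simp add: of_nat_diff algebra_simps)
next
  case False then show ?thesis by (simp add: binomial_eq_0)
qed

lemma central_nat: "int (Suc k) * int ((2 * Suc k) choose Suc k) = 2*(2*int k+1) * int ((2*k) choose k)"
proof -
  have "real (Suc k) * real ((2 * Suc k) choose Suc k) = 2*(2*real k+1) * real ((2*k) choose k)"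
    using central_rec[of k] by (simp add: algebra_simps)
  then have "real_of_int (int (Suc k) * int ((2 * Suc k) choose Suc k)) = real_of_int (2*(2*int k+1) * int ((2*k) choose k))"
    by simp
  then show ?thesis by (simp only: of_int_eq_iff)
qed

lemma central_cong:
  assumes p: "prime p" and odd: "odd p"
  shows "k \<le> p - 1 \<Longrightarrow> [int ((2*k) choose k) = (-4)^k * int ((p - 1) div 2 choose k)] (mod int p)"
proof (induction k)
  case 0 then show ?case by simp
next
  case (Suc k)
  define h where "h = (p - 1) div 2"
  have p1: "p \<ge> 2" using p prime_ge_2_nat by blast
  have ph: "int p = 2 * int h + 1" using odd p1 unfolding h_def by (auto elim!: oddE)
  have IH: "[int ((2*k) choose k) = (-4)^k * int (h choose k)] (mod int p)" using Suc h_def by simp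
  have "int (Suc k) * int ((2 * Suc k) choose Suc k) = 2*(2*int k+1) * int ((2*k) choose k)" by (rule central_nat)
  also have "[\<dots> = 2*(2*int k+1) * ((-4)^k * int (h choose k))] (mod int p)"
    using IH by (intro cong_mult cong_refl)
  also have "[2*(2*int k+1) * ((-4)^k * int (h choose k)) = (-4)^Suc k * ((int h - int k) * int (h choose k))] (mod int p)"
  proof -
    have "2*(2*int k+1) * ((-4)^k * int (h choose k)) - (-4)^Suc k * ((int h - int k) * int (h choose k))
       = int p * (2 * ((-4)^k * int (h choose k)))"
      unfolding ph by (simp add: algebra_simps)
    then show ?thesis unfolding cong_iff_dvd_diff by (metis dvd_triv_left)
  qed
  also have "(-4)^Suc k * ((int h - int k) * int (h choose k)) = int (Suc k) * ((-4)^Suc k * int (h choose Suc k))"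
  proof -
    have eq: "(int h - int k) * int (h choose k) = int (Suc k) * int (h choose Suc k)" using absorb_h[of k h] by simp
    show ?thesis unfolding eq by (simp add: ac_simps)
  qed
  finally have c: "[int (Suc k) * int ((2 * Suc k) choose Suc k) = int (Suc k) * ((-4)^Suc k * int (h choose Suc k))] (mod int p)" .
  have cp: "coprime (int (Suc k)) (int p)" using cop[OF p, of "Suc k"] Suc.prems p1 by simp
  show ?case using iffD1[OF cong_mult_lcancel[OF cp] c[unfolded h_def]] .
qed

lemma legendre_sq: assumes p: "prime p" "p > 3" shows "Legendre (-3) (int p) * Legendre (-3) (int p) = 1"
proof -
  have "\<not> [-3 = 0] (mod int p)"
  proof
    assume "[-3 = 0] (mod int p)"
    then have "int p dvd 3" unfolding cong_iff_dvd_diff by simp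
    then have "p dvd 3" by (metis int_dvd_int_iff of_nat_numeral)
    then show False using p by (auto dest: dvd_imp_le)
  qed
  then show ?thesis unfolding Legendre_def by auto
qed

lemma b_last: assumes p: "prime p" "p > 3"
  shows "[Legendre (-3) (int p) * seq_b (p - 1) = 1] (mod int p)"
proof -
  define h where "h = (p - 1) div 2"
  have odd: "odd p" using p by (intro prime_odd_nat) auto
  have hp: "h \<le> p - 1" unfolding h_def by simp
  have "[seq_b (p - 1) = (\<Sum>k=0..p-1. (-4)^k * int (h choose k))] (mod int p)"
    unfolding seq_b_def
  proof (rule cong_sum)
    fix k assume k: "k \<in> {0..p-1}"
    have "[int (p - 1 choose k)^2 = ((-1)^k)^2] (mod int p)"
      using binom_pm1[OF p(1)] k by (intro cong_pow) simp
    then have a: "[int (p - 1 choose k)^2 = 1] (mod int p)" by (simp add: power_even_eq[symmetric] ac_simps)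
    have b: "[int ((2*k) choose k) = (-4)^k * int (h choose k)] (mod int p)"
      using central_cong[OF p(1) odd] k unfolding h_def by simp
    show "[int (p - 1 choose k)^2 * int ((2*k) choose k) = (-4)^k * int (h choose k)] (mod int p)"
      using cong_mult[OF a b] by simp
  qed
  also have "(\<Sum>k=0..p-1. (-4)^k * int (h choose k)) = (\<Sum>k\<le>h. (-4)^k * int (h choose k))"
  proof -
    have "(\<Sum>k=0..p-1. (-4)^k * int (h choose k)) = (\<Sum>k=0..h. (-4)^k * int (h choose k))"
      using hp by (intro sum.mono_neutral_right) (auto simp: binomial_eq_0)
    then show ?thesis by (simp add: atLeast0AtMost)
  qed
  also have "\<dots> = (-3)^h" using binomial_ring[of "-4::int" 1 h] by (simp add: ac_simps)
  also have "[((-3::int))^h = Legendre (-3) (int p)] (mod int p)"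
    using euler_criterion[of p "-3"] p unfolding h_def by (simp add: cong_sym)
  finally have "[seq_b (p - 1) = Legendre (-3) (int p)] (mod int p)" .
  then have "[Legendre (-3) (int p) * seq_b (p - 1) = Legendre (-3) (int p) * Legendre (-3) (int p)] (mod int p)"
    by (intro cong_mult cong_refl)
  then show ?thesis using legendre_sq[OF p] by simp
qed

theorem part2: assumes p: "prime p" "p > 3" and n: "n \<le> p - 1"
  shows "[seq_b n = Legendre (-3) (int p) * 9 ^ n * seq_b (p - 1 - n)] (mod int p)"
proof -
  define c where "c \<equiv> \<lambda>m. Legendre (-3) (int p) * 9^m * seq_b (p - 1 - m)"
  have "[seq_b n = c n] (mod int p)"
  proof (rule uniq[OF p(1), where A = "\<lambda>n. 10*int n^2 + 10*int n + 3" and B = "\<lambda>n. -9*(int n)^2"])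
    show "\<And>n. Suc n \<le> p - 1 \<Longrightarrow> [(int n + 1)^2 * seq_b (Suc n) = (10*int n^2 + 10*int n + 3) * seq_b n + (-9*(int n)^2) * seq_b (n - 1)] (mod int p)"
      using rec_b_fwd by simp
    show "\<And>n. Suc n \<le> p - 1 \<Longrightarrow> [(int n + 1)^2 * c (Suc n) = (10*int n^2 + 10*int n + 3) * c n + (-9*(int n)^2) * c (n - 1)] (mod int p)"
      unfolding c_def by (rule crec_b[OF p(1)])
    show "[seq_b 0 = c 0] (mod int p)"
      using b_last[OF p] unfolding c_def by (simp add: seq_b_def cong_sym)
    show "n \<le> p - 1" by (rule n)
  qed
  then show ?thesis unfolding c_def .
qed

theorem mainTheorem7:
  shows "(\<forall>(p::nat) n. prime p \<longrightarrow> n \<le> p - 1 \<longrightarrow>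
            [apery_a n = (-1) ^ n * apery_a (p - 1 - n)] (mod int p))
       \<and> (\<forall>(p::nat) n. prime p \<longrightarrow> p > 3 \<longrightarrow> n \<le> p - 1 \<longrightarrow>
            [seq_b n = Legendre (-3) (int p) * 9 ^ n * seq_b (p - 1 - n)] (mod int p))"
  using part1 part2 by blast


end
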